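(* Let $x=x_1\cdots x_n\in S_n$. If $x_i$ is a left-to-right minimum of $x$ and $x_i$ appears to the left of $x_j$ in $s_{132,321}(x)$, then $j<i$.
   Context: An entry $x_i$ is a left-to-right minimum of $x$ if it is smaller than every entry to its left. A permutation contains a pattern $p$ if it has a subsequence order-isomorphic to $p$; otherwise it avoids $p$. The map $s_{132,321}$ is defined as follows: the entries of the input permutation are read from left to right, with an initially empty stack. At each step, if the input is nonempty and pushing the next input entry onto the stack produces a stack whose contents, read from top to bottom, avoid both $132$ and $321$, that entry is pushed; otherwise the top entry of the stack is popped and appended to the output. When the input is exhausted, the remaining stack entries are popped one at a time to the output. $s_{132,321}(x)$ is the output word. *)

theory Defs
  imports Main
begin

definition contains_pat :: "nat list \<Rightarrow> nat list \<Rightarrow> bool" where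
  "contains_pat w p \<longleftrightarrow>
     (\<exists>idx :: nat \<Rightarrow> nat.
        (\<forall>a b. a < b \<and> b < length p \<longrightarrow> idx a < idx b) \<and>
        (\<forall>a. a < length p \<longrightarrow> idx a < length w) \<and>
        (\<forall>a b. a < length p \<and> b < length p \<longrightarrow>
                 (w ! idx a < w ! idx b \<longleftrightarrow> p ! a < p ! b)))"

definition avoids_pat :: "nat list \<Rightarrow> nat list \<Rightarrow> bool" where
  "avoids_pat w p \<longleftrightarrow> \<not> contains_pat w p"

(* The stack is a list whose head is the top; so the list itself is the stack
   contents read from top to bottom. *)
definition stack_ok :: "nat list \<Rightarrow> bool" where
  "stack_ok st \<longleftrightarrow> avoids_pat st [1,3,2] \<and> avoids_pat st [3,2,1]"

(* s_run input stack = remaining output produced from this configuration. *)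
function s_run :: "nat list \<Rightarrow> nat list \<Rightarrow> nat list" where
  "s_run [] st = st"
| "s_run (a # inp) st =
     (if stack_ok (a # st) then s_run inp (a # st)
      else (case st of [] \<Rightarrow> s_run inp [a] | b # st' \<Rightarrow> b # s_run (a # inp) st'))"
  by pat_completeness auto
termination
  by (relation "measure (\<lambda>(inp, st). 2 * length inp + length st)") auto

definition s132_321 :: "nat list \<Rightarrow> nat list" where
  "s132_321 x = s_run x []"

definition is_perm :: "nat \<Rightarrow> nat list \<Rightarrow> bool" where
  "is_perm n x \<longleftrightarrow> length x = n \<and> distinct x \<and> set x = {1..n}"

(* 0-based index i: x!i is a left-to-right minimum *)
definition ltr_min :: "nat list \<Rightarrow> nat \<Rightarrow> bool" where
  "ltr_min x i \<longleftrightarrow> i < length x \<and> (\<forall>k<i. x ! i < x ! k)"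

definition appears_left :: "nat list \<Rightarrow> nat \<Rightarrow> nat \<Rightarrow> bool" where
  "appears_left y u v \<longleftrightarrow> (\<exists>p q. p < q \<and> q < length y \<and> y ! p = u \<and> y ! q = v)"

end

theory Submission
  imports Defs
begin

lemma len_s_run: "length (s_run inp st) = length inp + length st \<and> set (s_run inp st) = set inp \<union> set st"
  by (induction inp st rule: s_run.induct) (auto split: list.splits if_splits)

lemma ok_sorted_tail:
  assumes "sorted L"
  shows "stack_ok (c # L)"
proof -
  have "\<not> contains_pat (c # L) p" if "p ! 1 > p ! 2" "length p = 3" for p
  proof
    assume "contains_pat (c # L) p"
    then obtain idx where i1: "\<forall>a b. a < b \<and> b < length p \<longrightarrow> idx a < idx b"
      and i2: "\<forall>a. a < length p \<longrightarrow> idx a < length (c # L)"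
      and i3: "\<forall>a b. a < length p \<and> b < length p \<longrightarrow>
                 ((c#L) ! idx a < (c#L) ! idx b \<longleftrightarrow> p ! a < p ! b)"
      unfolding contains_pat_def by blast
    have a: "idx 0 < idx 1" "idx 1 < idx 2" "idx 2 < length (c#L)"
      using i1 i2 that by auto
    have b: "(c#L) ! idx 2 < (c#L) ! idx 1" using i3 that by auto
    obtain k1 where k1: "idx 1 = Suc k1" using a by (cases "idx 1") auto
    obtain k2 where k2: "idx 2 = Suc k2" using a by (cases "idx 2") auto
    have "L ! k1 \<le> L ! k2" using assms a k1 k2 by (simp add: sorted_iff_nth_mono)
    then show False using b k1 k2 by simp
  qed
  then show ?thesis unfolding stack_ok_def avoids_pat_def by auto
qed

lemma ok_min_sorted:
  assumes "stack_ok (a # L)" "\<forall>c\<in>set L. a < c"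
  shows "sorted L"
proof (rule ccontr)
  assume "\<not> sorted L"
  then obtain p q where pq: "p < q" "q < length L" "L ! p > L ! q"
    unfolding sorted_iff_nth_mono by (metis le_less not_le)
  define idx where "idx = (\<lambda>k::nat. if k = 0 then 0 else if k = 1 then Suc p else Suc q)"
  have ap: "a < L ! p" "a < L ! q" using assms(2) pq by auto
  have "contains_pat (a # L) [1,3,2]"
    unfolding contains_pat_def
  proof (intro exI[of _ idx] conjI allI impI)
    fix x y :: nat assume "x < y \<and> y < length [1::nat,3,2]"
    then show "idx x < idx y" using pq by (auto simp: idx_def)
  next
    fix x :: nat assume "x < length [1::nat,3,2]"
    then show "idx x < length (a # L)" using pq by (auto simp: idx_def)
  next
    fix x y :: nat assume "x < length [1::nat,3,2] \<and> y < length [1::nat,3,2]"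
    then have "x \<in> {0,1,2}" "y \<in> {0,1,2}" by auto
    then show "((a # L) ! idx x < (a # L) ! idx y) = ([1::nat,3,2] ! x < [1,3,2] ! y)"
      using ap pq by (auto simp: idx_def)
  qed
  then show False using assms(1) unfolding stack_ok_def avoids_pat_def by simp
qed

lemma after_push:
  assumes "sorted L"
  shows "\<forall>above. st = above @ L \<longrightarrow>
     (\<exists>w. s_run inp st = w @ L \<and> set w = set inp \<union> set above)"
proof (induction inp st rule: s_run.induct)
  case (1 st)
  then show ?case by auto
next
  case (2 a inp st)
  show ?case
  proof (intro allI impI)
    fix above assume st: "st = above @ L"
    show "\<exists>w. s_run (a # inp) st = w @ L \<and> set w = set (a # inp) \<union> set above"
    proof (cases "stack_ok (a # st)")
      case True
      then obtain w where "s_run inp (a # st) = w @ L" "set w = set inp \<union> set (a # above)"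
        using 2(1)[OF True, rule_format, of "a # above"] st by auto
      then show ?thesis using True by auto
    next
      case False
      show ?thesis
      proof (cases st)
        case Nil
        then have "L = []" "above = []" using st Nil by auto
        then obtain w where "s_run inp [a] = w @ L" "set w = set inp \<union> set [a]"
          using 2(2)[OF False Nil, rule_format, of "[a]"] by auto
        then show ?thesis using False Nil \<open>above = []\<close> by auto
      next
        case (Cons b st')
        show ?thesis
        proof (cases above)
          case Nil
          then have "stack_ok (a # st)" using st ok_sorted_tail[OF assms] by simp
          then show ?thesis using False by simp
        next
          case (Cons b' above')
          then have "b = b'" "st' = above' @ L" using st \<open>st = b # st'\<close> by auto
          then obtain w where "s_run (a # inp) st' = w @ L" "set w = set (a # inp) \<union> set above'"
            using 2(3)[OF False \<open>st = b # st'\<close>, rule_format, of above'] by auto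
          then show ?thesis using False \<open>st = b # st'\<close> Cons \<open>b = b'\<close>
            by (intro exI[of _ "b # w"]) auto
        qed
      qed
    qed
  qed
qed

lemma prefix_run:
  "\<forall>pre rest. inp = pre @ rest \<longrightarrow>
     (\<exists>u st'. s_run inp st = u @ s_run rest st' \<and> set st' \<subseteq> set pre \<union> set st)"
proof (induction inp st rule: s_run.induct)
  case (1 st)
  then show ?case by (intro allI impI exI[of _ "[]"] exI[of _ st]) auto
next
  case (2 a inp st)
  show ?case
  proof (intro allI impI)
    fix pre rest assume e: "a # inp = pre @ rest"
    show "\<exists>u st'. s_run (a # inp) st = u @ s_run rest st' \<and> set st' \<subseteq> set pre \<union> set st"
    proof (cases pre)
      case Nil
      then show ?thesis using e by (intro exI[of _ "[]"] exI[of _ st]) auto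
    next
      case (Cons a' pre')
      then have pe: "a' = a" "inp = pre' @ rest" using e by auto
      show ?thesis
      proof (cases "stack_ok (a # st)")
        case True
        then obtain u st' where "s_run inp (a # st) = u @ s_run rest st'"
          "set st' \<subseteq> set pre' \<union> set (a # st)"
          using 2(1)[OF True, rule_format, OF pe(2)] by blast
        then show ?thesis using True Cons pe by auto
      next
        case False
        show ?thesis
        proof (cases st)
          case Nil
          then obtain u st' where "s_run inp [a] = u @ s_run rest st'"
            "set st' \<subseteq> set pre' \<union> set [a]"
            using 2(2)[OF False Nil, rule_format, OF pe(2)] by blast
          then show ?thesis using False Nil Cons pe by auto
        next
          case (Cons b st'')
          then obtain u st' where "s_run (a # inp) st'' = u @ s_run rest st'"
            "set st' \<subseteq> set pre \<union> set st''"
            using 2(3)[OF False Cons, rule_format, OF e] by blast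
          then show ?thesis using False Cons
            by (intro exI[of _ "b # u"] exI[of _ st']) auto
        qed
      qed
    qed
  qed
qed

lemma push_min:
  assumes "\<forall>c\<in>set st. a < c"
  shows "\<exists>u st''. s_run (a # post) st = u @ s_run post (a # st'') \<and> set st'' \<subseteq> set st
     \<and> (stack_ok (a # st'') \<or> st'' = [])"
  using assms
proof (induction st)
  case Nil
  then show ?case by (cases "stack_ok [a]") (auto intro!: exI[of _ "[]"])
next
  case (Cons b st)
  show ?case
  proof (cases "stack_ok (a # b # st)")
    case True
    then show ?thesis by (intro exI[of _ "[]"] exI[of _ "b # st"]) auto
  next
    case False
    obtain u st'' where "s_run (a # post) st = u @ s_run post (a # st'')"
      "set st'' \<subseteq> set st" "stack_ok (a # st'') \<or> st'' = []"
      using Cons by auto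
    then show ?thesis using False by (intro exI[of _ "b # u"] exI[of _ st'']) auto
  qed
qed

theorem lemma3p1:
  fixes n :: nat and x :: "nat list" and i j :: nat
  assumes "is_perm n x"
    and "i < n" and "j < n"
    and "ltr_min x i"
    and "appears_left (s132_321 x) (x ! i) (x ! j)"
  shows "j < i"
proof (rule ccontr)
  assume nji: "\<not> j < i"
  have lx: "length x = n" "distinct x" using assms(1) unfolding is_perm_def by auto
  define pre where "pre = take i x"
  define post where "post = drop (Suc i) x"
  have xs: "x = pre @ (x ! i # post)"
    unfolding pre_def post_def using assms(2) lx by (simp add: id_take_nth_drop)
  obtain u st' where r1: "s_run x [] = u @ s_run (x ! i # post) st'" "set st' \<subseteq> set pre"
    using prefix_run[rule_format, OF xs, of "[]"] by auto
  have big: "\<forall>c\<in>set st'. x ! i < c"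
  proof
    fix c assume "c \<in> set st'"
    then have "c \<in> set pre" using r1 by auto
    then obtain k where "k < i" "c = x ! k" unfolding pre_def
      using assms(2) lx by (auto simp: in_set_conv_nth)
    then show "x ! i < c" using assms(4) unfolding ltr_min_def by auto
  qed
  obtain u2 st'' where r2: "s_run (x ! i # post) st' = u2 @ s_run post (x ! i # st'')"
    "set st'' \<subseteq> set st'" "stack_ok (x ! i # st'') \<or> st'' = []"
    using push_min[OF big] by blast
  have "sorted st''" using r2 big ok_min_sorted[of "x ! i" st''] by auto
  then have srt: "sorted (x ! i # st'')" using r2(2) big by (auto intro: less_imp_le)
  obtain w where r3: "s_run post (x ! i # st'') = w @ (x ! i # st'')" "set w = set post"
    using after_push[OF srt, rule_format, of "x ! i # st''" "[]" post] by auto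
  define y where "y = s132_321 x"
  have y: "y = (u @ u2 @ w) @ x ! i # st''"
    unfolding y_def s132_321_def using r1 r2 r3 by simp
  have "length y = length x" "set y = set x" unfolding y_def s132_321_def using len_s_run[of x "[]"] by simp_all
  then have dy: "distinct y" using lx by (metis card_distinct distinct_card)
  obtain p q where pq: "p < q" "q < length y" "y ! p = x ! i" "y ! q = x ! j"
    using assms(5) unfolding appears_left_def y_def by blast
  define k0 where "k0 = length (u @ u2 @ w)"
  have k0: "k0 < length y" "y ! k0 = x ! i" unfolding k0_def y by (simp_all add: nth_append)
  have pk: "p = k0" using pq k0 dy nth_eq_iff_index_eq by (metis less_trans)
  show False
  proof (cases "j = i")
    case True
    then show ?thesis using pq pk k0 dy nth_eq_iff_index_eq by (metis less_irrefl)
  next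
    case False
    then have "i < j" using nji by simp
    then have "x ! j \<in> set post" unfolding post_def using assms(3) lx
      by (auto simp: in_set_conv_nth intro!: exI[of _ "j - Suc i"])
    then obtain m where m: "m < length w" "w ! m = x ! j" using r3(2) by (metis in_set_conv_nth)
    define k1 where "k1 = length (u @ u2) + m"
    have k1: "k1 < k0" "y ! k1 = x ! j" unfolding k1_def k0_def y using m by (simp_all add: nth_append)
    have "q = k1" using pq k1 k0 dy nth_eq_iff_index_eq by (metis less_trans)
    then show False using pq pk k1 by simp
  qed
qed
end
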